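(* There is no split graph $(S,K,I)$ such that the factor graph $\Phi(S)$ contains an induced path $v_5v_4v_1v_2v_3$ (on five distinct vertices, in this order along the path) with $\max\{d_i: i\in[5]\}=d_1$.
   Context: A split graph $(S,K,I)$ is a graph $S$ together with a fixed partition $V(S)=K\dot\cup I$, where $K$ is a clique and $I$ is an independent set. For a vertex $v_i$ of $S$, $N_i$ denotes its open neighborhood in $S$ and $d_i=|N_i|$ its degree in $S$; for $u,v$ write $\eta_{uv}=|N_u\cap N_v|$. The factor graph $\Phi(S)$ is the loopless multigraph with vertex set $I$ in which, for distinct $u,v\in I$, there is one edge joining $u$ and $v$ for each 2-switch of $S$ acting on $u$ and $v$ (a 2-switch replaces edges $ab,cd$ with $ac,bd$ when $ab,cd\in E(S)$ and $ac,bd\notin E(S)$); equivalently, the multiplicity of the edge $uv$ is $\sigma_{uv}=(d_u-\eta_{uv})(d_v-\eta_{uv})$, and $u,v$ are adjacent iff $\sigma_{uv}>0$. An induced path in $\Phi(S)$ consists of distinct vertices, consecutive ones adjacent and no other pair adjacent (multiplicities ignored for adjacency). *)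

theory Defs
  imports Main
begin

definition simple_graph :: "'a set \<Rightarrow> ('a \<Rightarrow> 'a \<Rightarrow> bool) \<Rightarrow> bool" where
  "simple_graph V E \<longleftrightarrow> finite V \<and> (\<forall>x y. E x y \<longrightarrow> x \<in> V \<and> y \<in> V)
     \<and> (\<forall>x y. E x y \<longrightarrow> E y x) \<and> (\<forall>x. \<not> E x x)"

definition split_graph :: "'a set \<Rightarrow> ('a \<Rightarrow> 'a \<Rightarrow> bool) \<Rightarrow> 'a set \<Rightarrow> 'a set \<Rightarrow> bool" where
  "split_graph V E K I \<longleftrightarrow> simple_graph V E \<and> K \<union> I = V \<and> K \<inter> I = {}
     \<and> (\<forall>x\<in>K. \<forall>y\<in>K. x \<noteq> y \<longrightarrow> E x y)
     \<and> (\<forall>x\<in>I. \<forall>y\<in>I. \<not> E x y)"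

definition nbhd :: "'a set \<Rightarrow> ('a \<Rightarrow> 'a \<Rightarrow> bool) \<Rightarrow> 'a \<Rightarrow> 'a set" where
  "nbhd V E v = {u \<in> V. E v u}"

definition deg :: "'a set \<Rightarrow> ('a \<Rightarrow> 'a \<Rightarrow> bool) \<Rightarrow> 'a \<Rightarrow> nat" where
  "deg V E v = card (nbhd V E v)"

definition eta :: "'a set \<Rightarrow> ('a \<Rightarrow> 'a \<Rightarrow> bool) \<Rightarrow> 'a \<Rightarrow> 'a \<Rightarrow> nat" where
  "eta V E u v = card (nbhd V E u \<inter> nbhd V E v)"

text \<open>Multiplicity sigma_uv of the edge uv in the factor graph.\<close>
definition sigma :: "'a set \<Rightarrow> ('a \<Rightarrow> 'a \<Rightarrow> bool) \<Rightarrow> 'a \<Rightarrow> 'a \<Rightarrow> nat" where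
  "sigma V E u v = (deg V E u - eta V E u v) * (deg V E v - eta V E u v)"

definition factor_adj :: "'a set \<Rightarrow> ('a \<Rightarrow> 'a \<Rightarrow> bool) \<Rightarrow> 'a set \<Rightarrow> 'a \<Rightarrow> 'a \<Rightarrow> bool" where
  "factor_adj V E I u v \<longleftrightarrow> u \<in> I \<and> v \<in> I \<and> u \<noteq> v \<and> sigma V E u v > 0"

definition induced_path :: "('a \<Rightarrow> 'a \<Rightarrow> bool) \<Rightarrow> 'a list \<Rightarrow> bool" where
  "induced_path A p \<longleftrightarrow> distinct p \<and>
     (\<forall>i<length p. \<forall>j<length p. i < j \<longrightarrow> (A (p!i) (p!j) \<longleftrightarrow> j = i + 1))"

end

theory Submission
  imports Defs
begin

lemma adj_iff:
  assumes "finite V" "u \<in> I" "v \<in> I" "u \<noteq> v"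
  shows "factor_adj V E I u v \<longleftrightarrow> \<not> nbhd V E u \<subseteq> nbhd V E v \<and> \<not> nbhd V E v \<subseteq> nbhd V E u"
proof -
  have f: "finite (nbhd V E u)" "finite (nbhd V E v)" using assms(1) unfolding nbhd_def by auto
  have a: "deg V E u - eta V E u v = card (nbhd V E u - nbhd V E v)"
    unfolding deg_def eta_def using f by (metis Diff_Int2 card_Diff_subset_Int finite_Int)
  have b: "deg V E v - eta V E u v = card (nbhd V E v - nbhd V E u)"
    unfolding deg_def eta_def using f by (metis Diff_Int2 Int_commute card_Diff_subset_Int finite_Int)
  show ?thesis unfolding factor_adj_def sigma_def a b using assms f by (auto simp: card_gt_0_iff)
qed

lemma cmp_deg:
  assumes "finite V" "nbhd V E a \<subseteq> nbhd V E b \<or> nbhd V E b \<subseteq> nbhd V E a"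
    "deg V E a \<le> deg V E b"
  shows "nbhd V E a \<subseteq> nbhd V E b"
proof -
  have f: "finite (nbhd V E a)" "finite (nbhd V E b)" using assms(1) unfolding nbhd_def by auto
  show ?thesis using assms(2,3) f card_subset_eq[of "nbhd V E a" "nbhd V E b"] unfolding deg_def
    by (metis card_mono le_antisym order_refl)
qed

theorem lemma2p3:
  fixes V :: "'a set" and E :: "'a \<Rightarrow> 'a \<Rightarrow> bool" and K I :: "'a set"
    and v1 v2 v3 v4 v5 :: 'a
  assumes "split_graph V E K I"
    and "induced_path (factor_adj V E I) [v5, v4, v1, v2, v3]"
    and "v1 \<in> I" "v2 \<in> I" "v3 \<in> I" "v4 \<in> I" "v5 \<in> I"
  shows "\<not> (Max {deg V E v1, deg V E v2, deg V E v3, deg V E v4, deg V E v5} = deg V E v1)"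
proof
  assume M: "Max {deg V E v1, deg V E v2, deg V E v3, deg V E v4, deg V E v5} = deg V E v1"
  have fin: "finite V" using assms(1) unfolding split_graph_def simple_graph_def by auto
  have d3: "deg V E v3 \<le> deg V E v1" and d5: "deg V E v5 \<le> deg V E v1" using M
    by (metis Max_ge finite.emptyI finite.insertI insertCI)+
  let ?p = "[v5, v4, v1, v2, v3]"
  have dist: "distinct ?p" and P: "\<And>i j. i < 5 \<Longrightarrow> j < 5 \<Longrightarrow> i < j \<Longrightarrow> (factor_adj V E I (?p!i) (?p!j) \<longleftrightarrow> j = i + 1)"
    using assms(2) unfolding induced_path_def by auto
  let ?N = "nbhd V E"
  note A = adj_iff[OF fin]
  have e54: "\<not> ?N v5 \<subseteq> ?N v4 \<and> \<not> ?N v4 \<subseteq> ?N v5" using P[of 0 1] A[of v5 I v4 E] assms dist by simp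
  have e41: "\<not> ?N v4 \<subseteq> ?N v1 \<and> \<not> ?N v1 \<subseteq> ?N v4" using P[of 1 2] A[of v4 I v1 E] assms dist by simp
  have e12: "\<not> ?N v1 \<subseteq> ?N v2 \<and> \<not> ?N v2 \<subseteq> ?N v1" using P[of 2 3] A[of v1 I v2 E] assms dist by simp
  have e23: "\<not> ?N v2 \<subseteq> ?N v3 \<and> \<not> ?N v3 \<subseteq> ?N v2" using P[of 3 4] A[of v2 I v3 E] assms dist by simp
  have n51: "?N v5 \<subseteq> ?N v1 \<or> ?N v1 \<subseteq> ?N v5" using P[of 0 2] A[of v5 I v1 E] assms dist by simp
  have n52: "?N v5 \<subseteq> ?N v2 \<or> ?N v2 \<subseteq> ?N v5" using P[of 0 3] A[of v5 I v2 E] assms dist by simp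
  have n42: "?N v4 \<subseteq> ?N v2 \<or> ?N v2 \<subseteq> ?N v4" using P[of 1 3] A[of v4 I v2 E] assms dist by simp
  have n43: "?N v4 \<subseteq> ?N v3 \<or> ?N v3 \<subseteq> ?N v4" using P[of 1 4] A[of v4 I v3 E] assms dist by simp
  have n13: "?N v3 \<subseteq> ?N v1 \<or> ?N v1 \<subseteq> ?N v3" using P[of 2 4] A[of v1 I v3 E] assms dist by auto
  have s31: "?N v3 \<subseteq> ?N v1" using cmp_deg[OF fin n13 d3] .
  have s51: "?N v5 \<subseteq> ?N v1" using cmp_deg[OF fin n51 d5] .
  show False using s31 s51 e54 e41 e12 e23 n52 n42 n43 by blast
qed

end
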